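(* Let $\underline{Q}$ be a lower transition rate operator. Then for any $t>0$ and any $x,y\in\mathcal{X}$: \begin{equation*} \overline{T}_{t}\mathbb{I}_{x}(y)>0 ~~\Leftrightarrow~~ x\text{ is upper reachable from }y. \end{equation*}
   Context: $\mathcal{X}$ is a finite state space and $\mathcal{L}(\mathcal{X})$ is the set of real-valued functions on $\mathcal{X}$; $\mathbb{I}_x$ denotes the indicator of $\{x\}$. A lower transition rate operator is a map $\underline{Q}\colon\mathcal{L}(\mathcal{X})\to\mathcal{L}(\mathcal{X})$ such that for all $f,g\in\mathcal{L}(\mathcal{X})$, $\lambda\geq0$, $\mu\in\mathbb{R}$ and $x,y\in\mathcal{X}$: $\underline{Q}(\mu)=0$; $\underline{Q}(f+g)\geq\underline{Q}(f)+\underline{Q}(g)$; $\underline{Q}(\lambda f)=\lambda\underline{Q}(f)$; and $x\neq y\Rightarrow\underline{Q}(\mathbb{I}_y)(x)\geq0$. Its conjugate is $\overline{Q}f\coloneqq-\underline{Q}(-f)$. For each $t\geq0$, $\underline{T}_t$ is defined for every $f$ by the (uniquely solvable) differential equation $\frac{d}{dt}\underline{T}_tf=\underline{Q}\,\underline{T}_tf$ for all $t\geq0$ with $\underline{T}_0f=f$, and $\overline{T}_tf\coloneqq-\underline{T}_t(-f)$. Upper reachability: $x$ is upper reachable from $y$ if there is a sequence $y=x_0,\dots,x_n=x$ with, for all $k\in\{1,\dots,n\}$, $x_k\neq x_{k-1}$ and $\overline{Q}(\mathbb{I}_{x_k})(x_{k-1})>0$. *)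

theory Defs
  imports "HOL-Analysis.Analysis"
begin

definition lower_transition_rate_operator ::
  "(('x::finite \<Rightarrow> real) \<Rightarrow> ('x \<Rightarrow> real)) \<Rightarrow> bool" where
  "lower_transition_rate_operator Q \<longleftrightarrow>
     (\<forall>\<mu>::real. Q (\<lambda>_. \<mu>) = (\<lambda>_. 0)) \<and>
     (\<forall>f g z. Q (\<lambda>w. f w + g w) z \<ge> Q f z + Q g z) \<and>
     (\<forall>f (c::real). c \<ge> 0 \<longrightarrow> Q (\<lambda>w. c * f w) = (\<lambda>z. c * Q f z)) \<and>
     (\<forall>x y. x \<noteq> y \<longrightarrow> Q (indicator {y}) x \<ge> 0)"

definition upper_rate ::
  "(('x::finite \<Rightarrow> real) \<Rightarrow> ('x \<Rightarrow> real)) \<Rightarrow> ('x \<Rightarrow> real) \<Rightarrow> ('x \<Rightarrow> real)" where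
  "upper_rate Q f = (\<lambda>z. - Q (\<lambda>w. - f w) z)"

definition solves_lower_ode ::
  "(('x::finite \<Rightarrow> real) \<Rightarrow> ('x \<Rightarrow> real)) \<Rightarrow> ('x \<Rightarrow> real) \<Rightarrow> (real \<Rightarrow> 'x \<Rightarrow> real) \<Rightarrow> bool" where
  "solves_lower_ode Q f \<phi> \<longleftrightarrow> \<phi> 0 = f \<and>
     (\<forall>s\<ge>0. \<forall>z. ((\<lambda>r. \<phi> r z) has_real_derivative Q (\<phi> s) z) (at s within {0..}))"

definition lower_T ::
  "(('x::finite \<Rightarrow> real) \<Rightarrow> ('x \<Rightarrow> real)) \<Rightarrow> real \<Rightarrow> ('x \<Rightarrow> real) \<Rightarrow> ('x \<Rightarrow> real)" where
  "lower_T Q t f = (THE \<phi>. solves_lower_ode Q f \<phi> \<and> (\<forall>s<0. \<phi> s = f)) t"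

text \<open>(The clause for s < 0 only normalises the irrelevant negative-time part
  so that THE picks a unique function.)\<close>

definition upper_T ::
  "(('x::finite \<Rightarrow> real) \<Rightarrow> ('x \<Rightarrow> real)) \<Rightarrow> real \<Rightarrow> ('x \<Rightarrow> real) \<Rightarrow> ('x \<Rightarrow> real)" where
  "upper_T Q t f = (\<lambda>z. - lower_T Q t (\<lambda>w. - f w) z)"

definition upper_reachable ::
  "(('x::finite \<Rightarrow> real) \<Rightarrow> ('x \<Rightarrow> real)) \<Rightarrow> 'x \<Rightarrow> 'x \<Rightarrow> bool" where
  "upper_reachable Q x y \<longleftrightarrow>
     (\<exists>(n::nat) (s::nat \<Rightarrow> 'x). s 0 = y \<and> s n = x \<and>
        (\<forall>k\<in>{1..n}. s k \<noteq> s (k - 1) \<and> upper_rate Q (indicator {s k}) (s (k - 1)) > 0))"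

end

theory Submission
  imports Defs
begin


lemma deriv_at: "(f has_real_derivative D) (at s within {0..}) \<Longrightarrow> s > 0 \<Longrightarrow> (f has_real_derivative D) (at s)"
proof -
  assume a: "(f has_real_derivative D) (at s within {0..})" "s > 0"
  have "at s within {0..} = at s" by (rule at_within_open_subset[of s "{0<..}"]) (use a in auto)
  then show ?thesis using a by simp
qed

lemma nonincr:
  fixes b b' :: "real \<Rightarrow> real"
  assumes d: "\<And>s. s \<ge> 0 \<Longrightarrow> (b has_real_derivative b' s) (at s within {0..})"
    and n: "\<And>s. s > 0 \<Longrightarrow> b' s \<le> 0" and t: "t \<ge> 0"
  shows "b t \<le> b 0"
proof (rule DERIV_nonpos_imp_decreasing_open[OF t])
  fix x :: real assume "0 < x" "x < t"
  then show "\<exists>y. DERIV b x :> y \<and> y \<le> 0" using d[of x] n[of x] deriv_at by auto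
next
  show "continuous_on {0..t} b"
    by (rule DERIV_continuous_on[where D=b'], rule DERIV_subset[OF d]) auto
qed

lemma decr:
  fixes b b' :: "real \<Rightarrow> real"
  assumes d: "\<And>s. s \<ge> 0 \<Longrightarrow> (b has_real_derivative b' s) (at s within {0..})"
    and n: "\<And>s. s > 0 \<Longrightarrow> b' s < 0" and t: "t > 0"
  shows "b t < b 0"
proof (rule DERIV_neg_imp_decreasing_open[OF t])
  fix x :: real assume "0 < x" "x < t"
  then show "\<exists>y. DERIV b x :> y \<and> y < 0" using d[of x] n[of x] deriv_at by auto
next
  show "continuous_on {0..t} b"
    by (rule DERIV_continuous_on[where D=b'], rule DERIV_subset[OF d]) auto
qed

lemma gronwall:
  fixes P P' :: "real \<Rightarrow> real"
  assumes d: "\<And>s. s \<ge> 0 \<Longrightarrow> (P has_real_derivative P' s) (at s within {0..})"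
    and n: "\<And>s. s \<ge> 0 \<Longrightarrow> P' s \<le> K * P s" and p0: "P 0 \<le> 0" and t: "t \<ge> 0"
  shows "P t \<le> 0"
proof -
  have dg: "((\<lambda>s. exp (-K * s) * P s) has_real_derivative exp (-K * s) * (P' s - K * P s)) (at s within {0..})"
    if "s \<ge> 0" for s
    by (rule derivative_eq_intros d that refl)+ (simp add: algebra_simps)
  have "(\<lambda>s. exp (-K * s) * P s) t \<le> (\<lambda>s. exp (-K * s) * P s) 0"
  proof (rule nonincr[where b'="\<lambda>s. exp (-K * s) * (P' s - K * P s)"])
    fix s :: real assume "s > 0"
    then show "exp (-K * s) * (P' s - K * P s) \<le> 0" using n[of s]
      by (intro mult_nonneg_nonpos) auto
  next
    fix s :: real assume "s \<ge> 0"
    then show "((\<lambda>s. exp (-K * s) * P s) has_real_derivative exp (-K * s) * (P' s - K * P s)) (at s within {0..})"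
      by (rule dg)
  qed (use t in auto)
  then have "exp (-K * t) * P t \<le> 0" using p0 by simp
  then show ?thesis by (simp add: mult_le_0_iff)
qed

lemma maxsq_deriv: "((\<lambda>y. (max 0 y)^2) has_real_derivative 2 * max 0 y) (at (y::real))"
proof (cases "y = 0")
  case True
  have "((\<lambda>y. (max 0 y)^2) has_real_derivative max 0 0) (at 0)"
    unfolding CARAT_DERIV
    by (rule exI[of _ "\<lambda>z. max 0 z"]) (auto simp: power2_eq_square continuous_intros)
  then show ?thesis using True by simp
next
  case False
  show ?thesis
  proof (cases "y > 0")
    case True
    have "((\<lambda>y. y^2) has_real_derivative 2 * y) (at y)" by (rule derivative_eq_intros refl)+ simp
    then have "((\<lambda>y. (max 0 y)^2) has_real_derivative 2 * y) (at y)"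
      by (rule has_field_derivative_transform_within_open[where S="{0<..}"]) (use True in \<open>auto simp: max_def\<close>)
    then show ?thesis using True by simp
  next
    case False
    with \<open>y \<noteq> 0\<close> have "y < 0" by auto
    have "((\<lambda>y. 0) has_real_derivative 0) (at y)" by simp
    then have "((\<lambda>y. (max 0 y)^2) has_real_derivative 0) (at y)"
      by (rule has_field_derivative_transform_within_open[where S="{..<0}"]) (use \<open>y < 0\<close> in \<open>auto simp: max_def\<close>)
    then show ?thesis using \<open>y < 0\<close> by simp
  qed
qed

lemma sumsq_deriv:
  fixes u :: "real \<Rightarrow> 'x::finite \<Rightarrow> real"
  assumes "\<And>w. ((\<lambda>r. u r w) has_real_derivative u' w) (at s within S)"
  shows "((\<lambda>r. \<Sum>w\<in>UNIV. (u r w)^2) has_real_derivative (\<Sum>w\<in>UNIV. 2 * u s w * u' w)) (at s within S)"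
  by (rule derivative_eq_intros assms refl)+ (simp add: algebra_simps)

lemma summaxsq_deriv:
  fixes u :: "real \<Rightarrow> 'x::finite \<Rightarrow> real"
  assumes "\<And>w. ((\<lambda>r. u r w) has_real_derivative u' w) (at s within S)"
  shows "((\<lambda>r. \<Sum>w\<in>UNIV. (max 0 (u r w))^2) has_real_derivative (\<Sum>w\<in>UNIV. 2 * max 0 (u s w) * u' w)) (at s within S)"
proof -
  have "((\<lambda>r. (max 0 (u r w))^2) has_real_derivative 2 * max 0 (u s w) * u' w) (at s within S)" for w
    using DERIV_chain2[OF maxsq_deriv assms] by simp
  then show ?thesis by (rule DERIV_sum)
qed

lemma sq_sum_le: "(\<Sum>v\<in>(A::'a set). \<bar>a v\<bar>)^2 \<le> real (card A) * (\<Sum>v\<in>A. (a v)^2)"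
proof -
  have "(\<Sum>v\<in>A. \<bar>a v\<bar>)^2 = (\<Sum>v\<in>A. \<Sum>w\<in>A. \<bar>a v\<bar> * \<bar>a w\<bar>)"
    by (simp add: power2_eq_square sum_product)
  also have "\<dots> \<le> (\<Sum>v\<in>A. \<Sum>w\<in>A. ((a v)^2 + (a w)^2)/2)"
  proof (intro sum_mono)
    fix v w
    have "0 \<le> (\<bar>a v\<bar> - \<bar>a w\<bar>)^2" by simp
    then show "\<bar>a v\<bar> * \<bar>a w\<bar> \<le> ((a v)^2 + (a w)^2)/2" by (simp add: power2_eq_square algebra_simps)
  qed
  also have "\<dots> = real (card A) * (\<Sum>v\<in>A. (a v)^2)"
    by (simp add: sum.distrib sum_divide_distrib[symmetric] sum_constant_scale ) (simp add: sum.swap[of _ A A] algebra_simps sum_distrib_left)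
  finally show ?thesis .
qed



locale ltro =
  fixes Q :: "('x::finite \<Rightarrow> real) \<Rightarrow> ('x \<Rightarrow> real)"
  assumes L: "lower_transition_rate_operator Q"
begin

lemma Qconst: "Q (\<lambda>_. \<mu>) = (\<lambda>_. 0)"
  using L unfolding lower_transition_rate_operator_def by blast

lemma Qsa: "Q (\<lambda>w. f w + g w) z \<ge> Q f z + Q g z"
  using L unfolding lower_transition_rate_operator_def by blast

lemma Qhom: "c \<ge> 0 \<Longrightarrow> Q (\<lambda>w. c * f w) z = c * Q f z"
  using L unfolding lower_transition_rate_operator_def by metis

lemma Qoff: "x \<noteq> y \<Longrightarrow> Q (indicator {y}) x \<ge> 0"
  using L unfolding lower_transition_rate_operator_def by blast

lemma Qconj: "Q f z + Q (\<lambda>w. - f w) z \<le> 0"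
proof -
  have "Q f z + Q (\<lambda>w. - f w) z \<le> Q (\<lambda>w. f w + - f w) z" by (rule Qsa)
  also have "(\<lambda>w. f w + - f w) = (\<lambda>_. 0::real)" by auto
  finally show ?thesis by (simp add: Qconst)
qed

lemma Qsum: "finite A \<Longrightarrow> Q (\<lambda>w. \<Sum>i\<in>A. F i w) z \<ge> (\<Sum>i\<in>A. Q (F i) z)"
proof (induction A rule: finite_induct)
  case empty
  then show ?case by (simp add: Qconst)
next
  case (insert a A)
  have "(\<Sum>i\<in>insert a A. Q (F i) z) = Q (F a) z + (\<Sum>i\<in>A. Q (F i) z)"
    using insert by simp
  also have "\<dots> \<le> Q (F a) z + Q (\<lambda>w. \<Sum>i\<in>A. F i w) z" using insert by simp
  also have "\<dots> \<le> Q (\<lambda>w. F a w + (\<Sum>i\<in>A. F i w)) z" by (rule Qsa)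
  also have "(\<lambda>w. F a w + (\<Sum>i\<in>A. F i w)) = (\<lambda>w. \<Sum>i\<in>insert a A. F i w)"
    using insert by simp
  finally show ?case .
qed

lemma decomp: "(h::'x\<Rightarrow>real) = (\<lambda>w. \<Sum>v\<in>UNIV. h v * indicator {v} w)"
proof (rule ext)
  fix w
  have "(\<lambda>v. h v * indicator {v} w) = (\<lambda>v. if v = w then h w else 0)" by (rule ext) (auto simp: indicator_def)
  then show "h w = (\<Sum>v\<in>UNIV. h v * indicator {v} w)" by simp
qed

lemma Qscal: "Q (\<lambda>w. a * indicator {v} w) z =
   (if a \<ge> 0 then a * Q (indicator {v}) z else (-a) * Q (\<lambda>w. - indicator {v} w) z)"
proof (cases "a \<ge> 0")
  case True
  then show ?thesis using Qhom[of a "indicator {v}" z] by simp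
next
  case False
  have "(\<lambda>w. a * indicator {v} w) = (\<lambda>w. (-a) * (- indicator {v} w))" by auto
  then show ?thesis using False Qhom[of "-a" "\<lambda>w. - indicator {v} w" z] by simp
qed

definition Cst :: real where
  "Cst = (\<Sum>z\<in>UNIV. \<Sum>v\<in>UNIV. \<bar>Q (indicator {v}) z\<bar> + \<bar>Q (\<lambda>w. - indicator {v} w) z\<bar>)"

lemma Cst_ge: "\<bar>Q (indicator {v}) z\<bar> \<le> Cst" "\<bar>Q (\<lambda>w. - indicator {v} w) z\<bar> \<le> Cst"
proof -
  have a: "\<bar>Q (indicator {v}) z\<bar> + \<bar>Q (\<lambda>w. - indicator {v} w) z\<bar>
     \<le> (\<Sum>v\<in>UNIV. \<bar>Q (indicator {v}) z\<bar> + \<bar>Q (\<lambda>w. - indicator {v} w) z\<bar>)"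
    by (rule member_le_sum) auto
  also have "\<dots> \<le> Cst" unfolding Cst_def
    by (rule member_le_sum[where f="\<lambda>z. \<Sum>v\<in>UNIV. \<bar>Q (indicator {v}) z\<bar> + \<bar>Q (\<lambda>w. - indicator {v} w) z\<bar>"])
       (auto intro: sum_nonneg)
  finally show "\<bar>Q (indicator {v}) z\<bar> \<le> Cst" "\<bar>Q (\<lambda>w. - indicator {v} w) z\<bar> \<le> Cst" by auto
qed

lemma Cst_nonneg: "Cst \<ge> 0"
  unfolding Cst_def by (auto intro!: sum_nonneg)

lemma Qlow: "Q h z \<ge> - (Cst * (\<Sum>v\<in>UNIV. \<bar>h v\<bar>))"
proof -
  have "(\<Sum>v\<in>UNIV. - (Cst * \<bar>h v\<bar>)) \<le> (\<Sum>v\<in>UNIV. Q (\<lambda>w. h v * indicator {v} w) z)"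
  proof (rule sum_mono)
    fix v
    show "- (Cst * \<bar>h v\<bar>) \<le> Q (\<lambda>w. h v * indicator {v} w) z"
    proof (cases "h v \<ge> 0")
      case True
      have "\<bar>Q (indicator {v}) z\<bar> \<le> Cst" by (rule Cst_ge)
      then have "- Cst \<le> Q (indicator {v}) z" by linarith
      then have "h v * (- Cst) \<le> h v * Q (indicator {v}) z" using True by (rule mult_left_mono)
      then show ?thesis using True by (simp add: Qscal algebra_simps)
    next
      case False
      have "\<bar>Q (\<lambda>w. - indicator {v} w) z\<bar> \<le> Cst" by (rule Cst_ge)
      then have "- Cst \<le> Q (\<lambda>w. - indicator {v} w) z" by linarith
      then have "(- h v) * (- Cst) \<le> (- h v) * Q (\<lambda>w. - indicator {v} w) z"
        using False by (intro mult_left_mono) auto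
      then show ?thesis using False by (simp add: Qscal algebra_simps)
    qed
  qed
  also have "\<dots> \<le> Q (\<lambda>w. \<Sum>v\<in>UNIV. h v * indicator {v} w) z" by (rule Qsum) simp
  also have "\<dots> = Q h z" using decomp[of h, symmetric] by simp
  finally show ?thesis by (simp add: sum_distrib_left sum_negf)
qed

lemma Qup: "Q h z \<le> Cst * (\<Sum>v\<in>UNIV. \<bar>h v\<bar>)"
  using Qconj[where f=h and z=z] Qlow[where h="\<lambda>w. - h w" and z=z] by simp

lemma Qlip: "\<bar>Q f z - Q g z\<bar> \<le> Cst * (\<Sum>v\<in>UNIV. \<bar>f v - g v\<bar>)"
proof -
  have e1: "f = (\<lambda>w. g w + (f w - g w))" by auto
  have e2: "g = (\<lambda>w. f w + (g w - f w))" by auto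
  have "Q f z \<ge> Q g z + Q (\<lambda>w. f w - g w) z" using Qsa[where f=g and g="\<lambda>w. f w - g w" and z=z] e1 by simp
  moreover have "Q g z \<ge> Q f z + Q (\<lambda>w. g w - f w) z" using Qsa[where f=f and g="\<lambda>w. g w - f w" and z=z] e2 by simp
  moreover have "Q (\<lambda>w. f w - g w) z \<ge> - (Cst * (\<Sum>v\<in>UNIV. \<bar>f v - g v\<bar>))" by (rule Qlow)
  moreover have "Q (\<lambda>w. g w - f w) z \<ge> - (Cst * (\<Sum>v\<in>UNIV. \<bar>g v - f v\<bar>))" by (rule Qlow)
  moreover have "(\<Sum>v\<in>UNIV. \<bar>g v - f v\<bar>) = (\<Sum>v\<in>UNIV. \<bar>f v - g v\<bar>)" by (simp add: abs_minus_commute)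
  ultimately show ?thesis by (simp only: abs_le_iff) linarith
qed

lemma Qpos_sum: assumes "\<And>v. h v \<ge> 0"
  shows "Q h z \<ge> (\<Sum>v\<in>UNIV. h v * Q (indicator {v}) z)"
proof -
  have "(\<Sum>v\<in>UNIV. h v * Q (indicator {v}) z) = (\<Sum>v\<in>UNIV. Q (\<lambda>w. h v * indicator {v} w) z)"
    using assms by (simp add: Qscal)
  also have "\<dots> \<le> Q (\<lambda>w. \<Sum>v\<in>UNIV. h v * indicator {v} w) z" by (rule Qsum) simp
  also have "\<dots> = Q h z" using decomp[of h, symmetric] by simp
  finally show ?thesis .
qed

lemma Qpos: assumes "\<And>v. h v \<ge> 0"
  shows "Q h z \<ge> h z * Q (indicator {z}) z"
proof -
  have "(\<Sum>v\<in>UNIV. h v * Q (indicator {v}) z) = h z * Q (indicator {z}) z + (\<Sum>v\<in>UNIV-{z}. h v * Q (indicator {v}) z)"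
    by (subst sum.remove[of UNIV z]) auto
  moreover have "(\<Sum>v\<in>UNIV-{z}. h v * Q (indicator {v}) z) \<ge> 0"
    using assms by (intro sum_nonneg) (auto intro!: mult_nonneg_nonneg Qoff)
  moreover have "(\<Sum>v\<in>UNIV. h v * Q (indicator {v}) z) \<le> Q h z" using assms by (rule Qpos_sum)
  ultimately show ?thesis by linarith
qed

end


context ltro begin

lemma sol_D: "solves_lower_ode Q f \<phi> \<Longrightarrow> s \<ge> 0 \<Longrightarrow> ((\<lambda>r. \<phi> r z) has_real_derivative Q (\<phi> s) z) (at s within {0..})"
  unfolding solves_lower_ode_def by blast

lemma sol_0: "solves_lower_ode Q f \<phi> \<Longrightarrow> \<phi> 0 = f"
  unfolding solves_lower_ode_def by blast

lemma uniq:
  assumes a: "solves_lower_ode Q f \<phi>" and b: "solves_lower_ode Q f \<psi>" and t: "t \<ge> 0"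
  shows "\<phi> t = \<psi> t"
proof -
  define D where "D r = (\<Sum>w\<in>UNIV. (\<phi> r w - \<psi> r w)^2)" for r
  define D' where "D' s = (\<Sum>w\<in>UNIV. 2 * (\<phi> s w - \<psi> s w) * (Q (\<phi> s) w - Q (\<psi> s) w))" for s
  define K where "K = 2 * Cst * real (card (UNIV::'x set))"
  have "D t \<le> 0"
  proof (rule gronwall[where P=D and P'=D' and K=K])
    fix s :: real assume s: "s \<ge> 0"
    show "(D has_real_derivative D' s) (at s within {0..})"
      unfolding D_def D'_def
      by (rule sumsq_deriv[where u="\<lambda>r w. \<phi> r w - \<psi> r w" and u'="\<lambda>w. Q (\<phi> s) w - Q (\<psi> s) w"])
         (intro DERIV_diff sol_D[OF a s] sol_D[OF b s])
    let ?S = "\<Sum>v\<in>UNIV. \<bar>\<phi> s v - \<psi> s v\<bar>"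
    have "D' s \<le> (\<Sum>w\<in>UNIV. 2 * \<bar>\<phi> s w - \<psi> s w\<bar> * (Cst * ?S))"
      unfolding D'_def
    proof (rule sum_mono)
      fix w
      have "2 * (\<phi> s w - \<psi> s w) * (Q (\<phi> s) w - Q (\<psi> s) w) \<le> 2 * \<bar>\<phi> s w - \<psi> s w\<bar> * \<bar>Q (\<phi> s) w - Q (\<psi> s) w\<bar>"
      proof -
        have "(\<phi> s w - \<psi> s w) * (Q (\<phi> s) w - Q (\<psi> s) w) \<le> \<bar>\<phi> s w - \<psi> s w\<bar> * \<bar>Q (\<phi> s) w - Q (\<psi> s) w\<bar>"
          by (metis abs_ge_self abs_mult)
        then show ?thesis by (simp only: mult.assoc)
      qed
      also have "\<dots> \<le> 2 * \<bar>\<phi> s w - \<psi> s w\<bar> * (Cst * ?S)"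
        by (intro mult_left_mono Qlip) auto
      finally show "2 * (\<phi> s w - \<psi> s w) * (Q (\<phi> s) w - Q (\<psi> s) w) \<le> 2 * \<bar>\<phi> s w - \<psi> s w\<bar> * (Cst * ?S)" .
    qed
    also have "\<dots> = 2 * Cst * ?S^2"
      by (simp add: sum_distrib_left[symmetric] sum_distrib_right[symmetric] power2_eq_square algebra_simps)
    also have "\<dots> \<le> 2 * Cst * (real (card (UNIV::'x set)) * D s)"
      unfolding D_def using Cst_nonneg by (intro mult_left_mono sq_sum_le) auto
    finally show "D' s \<le> K * D s" unfolding K_def by (simp add: algebra_simps)
  next
    show "D 0 \<le> 0" unfolding D_def using sol_0[OF a] sol_0[OF b] by simp
  qed (rule t)
  then have "\<forall>w\<in>UNIV. (\<phi> t w - \<psi> t w)^2 = 0"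
    unfolding D_def by (subst sum_nonneg_eq_0_iff[symmetric]) (auto intro!: antisym sum_nonneg)
  then show ?thesis by auto
qed

lemma nonpos:
  assumes a: "solves_lower_ode Q f \<phi>" and f: "\<And>w. f w \<le> 0" and t: "t \<ge> 0"
  shows "\<phi> t w \<le> 0"
proof -
  define P where "P r = (\<Sum>w\<in>UNIV. (max 0 (\<phi> r w))^2)" for r
  define P' where "P' s = (\<Sum>w\<in>UNIV. 2 * max 0 (\<phi> s w) * Q (\<phi> s) w)" for s
  define K where "K = 2 * Cst * real (card (UNIV::'x set))"
  have "P t \<le> 0"
  proof (rule gronwall[where P=P and P'=P' and K=K])
    fix s :: real assume s: "s \<ge> 0"
    show "(P has_real_derivative P' s) (at s within {0..})"
      unfolding P_def P'_def by (rule summaxsq_deriv, rule sol_D[OF a s])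
    let ?S = "\<Sum>v\<in>UNIV. max 0 (\<phi> s v)"
    have "P' s \<le> (\<Sum>w\<in>UNIV. 2 * max 0 (\<phi> s w) * (Cst * ?S))"
      unfolding P'_def
    proof (rule sum_mono)
      fix w
      show "2 * max 0 (\<phi> s w) * Q (\<phi> s) w \<le> 2 * max 0 (\<phi> s w) * (Cst * ?S)"
      proof (cases "\<phi> s w > 0")
        case False then show ?thesis by simp
      next
        case True
        define p where "p = (\<lambda>v. max 0 (\<phi> s v))"
        define n where "n = (\<lambda>v. p v - \<phi> s v)"
        have "Q (\<lambda>v. \<phi> s v + n v) w \<ge> Q (\<phi> s) w + Q n w" by (rule Qsa)
        moreover have "(\<lambda>v. \<phi> s v + n v) = p" unfolding n_def by auto
        moreover have "Q n w \<ge> n w * Q (indicator {w}) w" by (rule Qpos) (auto simp: n_def p_def)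
        moreover have "n w = 0" using True by (simp add: n_def p_def)
        moreover have "Q p w \<le> Cst * (\<Sum>v\<in>UNIV. \<bar>p v\<bar>)" by (rule Qup)
        moreover have "(\<Sum>v\<in>UNIV. \<bar>p v\<bar>) = ?S" by (simp add: p_def)
        ultimately have "Q (\<phi> s) w \<le> Cst * ?S" by simp
        then show ?thesis using True by (intro mult_left_mono) auto
      qed
    qed
    also have "\<dots> = 2 * Cst * ?S^2"
      by (simp add: sum_distrib_left[symmetric] sum_distrib_right[symmetric] power2_eq_square algebra_simps)
    also have "?S^2 = (\<Sum>v\<in>UNIV. \<bar>max 0 (\<phi> s v)\<bar>)^2" by simp
    also have "2 * Cst * \<dots> \<le> 2 * Cst * (real (card (UNIV::'x set)) * P s)"
      unfolding P_def using Cst_nonneg by (intro mult_left_mono sq_sum_le) auto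
    finally show "P' s \<le> K * P s" unfolding K_def by (simp add: algebra_simps)
  next
    have "\<And>w. max 0 (\<phi> 0 w) = 0" using sol_0[OF a] f by (simp add: max_absorb1)
    then show "P 0 \<le> 0" unfolding P_def by simp
  qed (rule t)
  then have "\<forall>w\<in>UNIV. (max 0 (\<phi> t w))^2 = 0"
    unfolding P_def by (subst sum_nonneg_eq_0_iff[symmetric]) (auto intro!: antisym sum_nonneg)
  then have "(max 0 (\<phi> t w))^2 = 0" by blast
  then show ?thesis by (cases "\<phi> t w \<le> 0") auto
qed

lemma keyineq:
  assumes g: "\<And>v. g v \<le> 0"
  shows "Q g w \<le> g z * upper_rate Q (indicator {z}) w + (if w = z then 0 else g w * Q (indicator {w}) w)"
proof -
  define m where "m = (\<lambda>v. g z * indicator {z} v - g v)"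
  have m0: "\<And>v. m v \<ge> 0" using g by (auto simp: m_def indicator_def)
  have "Q (\<lambda>v. g v + m v) w \<ge> Q g w + Q m w" by (rule Qsa)
  moreover have "(\<lambda>v. g v + m v) = (\<lambda>v. (- g z) * (- indicator {z} v))" by (auto simp: m_def)
  moreover have "Q (\<lambda>v. (- g z) * (- indicator {z} v)) w = (- g z) * Q (\<lambda>v. - indicator {z} v) w"
    using g[of z] by (intro Qhom) auto
  moreover have "Q m w \<ge> m w * Q (indicator {w}) w" by (rule Qpos[OF m0])
  moreover have "m w = (if w = z then 0 else - g w)" by (auto simp: m_def)
  ultimately show ?thesis by (auto simp: upper_rate_def split: if_splits)
qed

end


lemma at_within_0: "x \<ge> 0 \<Longrightarrow> x < T \<Longrightarrow> at x within {0..T} = at x within {0::real..}"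
  by (rule at_within_nhd[of x "{..<T}"]) auto

lemma FTC0:
  assumes c: "continuous_on {0..} g" and x: "x \<ge> (0::real)"
  shows "((\<lambda>u. integral {0..u} g) has_real_derivative g x) (at x within {0..})"
proof -
  have "((\<lambda>u. integral {0..u} g) has_real_derivative g x) (at x within {0..x+1})"
    by (rule integral_has_real_derivative) (use x in \<open>auto intro: continuous_on_subset[OF c]\<close>)
  then show ?thesis using at_within_0[of x "x+1"] x by simp
qed

lemma cont_extend:
  assumes "\<And>T. T \<ge> 0 \<Longrightarrow> continuous_on {0..T} h"
  shows "continuous_on {0::real..} h"
  unfolding continuous_on_eq_continuous_within
proof
  fix x :: real assume x: "x \<in> {0..}"
  have "continuous_on {0..x+1} h" using assms x by auto
  then have "continuous (at x within {0..x+1}) h" using x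
    by (auto simp: continuous_on_eq_continuous_within)
  then show "continuous (at x within {0..}) h" using at_within_0[of x "x+1"] x
    by (simp add: continuous_within)
qed

lemma int_pow:
  assumes "t \<ge> (0::real)"
  shows "integral {0..t} (\<lambda>s. c * s ^ k) = c * t ^ Suc k / real (Suc k)"
proof -
  have "((\<lambda>s. c * s ^ k) has_integral ((\<lambda>s. c / real (Suc k) * s ^ Suc k) t - (\<lambda>s. c / real (Suc k) * s ^ Suc k) 0)) {0..t}"
  proof (rule fundamental_theorem_of_calculus[OF assms])
    fix x :: real assume "x \<in> {0..t}"
    have "((\<lambda>s. c / real (Suc k) * s ^ Suc k) has_real_derivative c / real (Suc k) * (real (Suc k) * x ^ (Suc k - Suc 0))) (at x within {0..t})"
      by (intro DERIV_cmult DERIV_pow)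
    moreover have "c / real (Suc k) * (real (Suc k) * x ^ (Suc k - Suc 0)) = c * x ^ k"
      by (simp del: of_nat_Suc)
    ultimately show "((\<lambda>s. c / real (Suc k) * s ^ Suc k) has_vector_derivative c * x ^ k) (at x within {0..t})"
      by (simp add: has_real_derivative_iff_has_vector_derivative)
  qed
  then have "integral {0..t} (\<lambda>s. c * s ^ k) = c / real (Suc k) * t ^ Suc k - c / real (Suc k) * 0 ^ Suc k"
    by (rule integral_unique)
  then show ?thesis by simp
qed

context ltro begin

lemma contQ:
  assumes c: "\<And>v. continuous_on S (\<lambda>s. g s v)"
  shows "continuous_on S (\<lambda>s. Q (g s) w)"
  unfolding continuous_on_def
proof
  fix x assume x: "x \<in> S"
  have "((\<lambda>s. Cst * (\<Sum>v\<in>UNIV. \<bar>g s v - g x v\<bar>)) \<longlongrightarrow> Cst * (\<Sum>v\<in>UNIV. \<bar>g x v - g x v\<bar>)) (at x within S)"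
    using c x unfolding continuous_on_def by (intro tendsto_intros) auto
  then have l: "((\<lambda>s. Cst * (\<Sum>v\<in>UNIV. \<bar>g s v - g x v\<bar>)) \<longlongrightarrow> 0) (at x within S)" by simp
  have "((\<lambda>s. Q (g s) w - Q (g x) w) \<longlongrightarrow> 0) (at x within S)"
    by (rule Lim_null_comparison[OF _ l]) (auto intro: always_eventually Qlip)
  then show "((\<lambda>s. Q (g s) w) \<longlongrightarrow> Q (g x) w) (at x within S)"
    by (rule LIM_zero_cancel)
qed

primrec pic :: "('x \<Rightarrow> real) \<Rightarrow> nat \<Rightarrow> real \<Rightarrow> 'x \<Rightarrow> real" where
  "pic f 0 = (\<lambda>t w. f w)"
| "pic f (Suc n) = (\<lambda>t w. f w + integral {0..t} (\<lambda>s. Q (pic f n s) w))"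

lemma pic_cont: "continuous_on {0..} (\<lambda>t. pic f n t w)"
proof (induction n arbitrary: w)
  case 0
  then show ?case by simp
next
  case (Suc n)
  have c: "continuous_on {0..} (\<lambda>s. Q (pic f n s) w)" by (rule contQ) (rule Suc)
  have "continuous_on {0..} (\<lambda>t. integral {0..t} (\<lambda>s. Q (pic f n s) w))"
    by (rule DERIV_continuous_on[OF FTC0[OF c]]) auto
  then show ?case by (simp add: continuous_intros)
qed

lemma pic_le0: "t \<le> 0 \<Longrightarrow> pic f n t = f"
proof (cases n)
  case (Suc m)
  assume "t \<le> 0"
  then show ?thesis using Suc by (cases "t = 0") (auto simp: fun_eq_iff)
qed simp

definition "Mf f = (\<Sum>w\<in>UNIV. \<bar>Q f w\<bar>)"
definition "Kc = real (card (UNIV::'x set)) * Cst"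

lemma Kc_nonneg: "Kc \<ge> 0" unfolding Kc_def using Cst_nonneg by simp
lemma Mf_nonneg: "Mf f \<ge> 0" unfolding Mf_def by (simp add: sum_nonneg)

lemma integrable_pic: "t \<ge> 0 \<Longrightarrow> (\<lambda>s. Q (pic f n s) w) integrable_on {0..t}"
  by (rule integrable_continuous_real, rule continuous_on_subset[OF contQ[OF pic_cont]]) auto

lemma pic_bound:
  "t \<ge> 0 \<Longrightarrow> (\<Sum>w\<in>UNIV. \<bar>pic f (Suc n) t w - pic f n t w\<bar>) \<le> Mf f * Kc ^ n * t ^ Suc n / fact (Suc n)"
proof (induction n arbitrary: t)
  case 0
  then show ?case by (simp add: Mf_def abs_mult sum_distrib_left mult.commute)
next
  case (Suc n)
  let ?B = "\<lambda>s. Cst * (Mf f * Kc ^ n) * s ^ Suc n / fact (Suc n)"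
  have w: "\<bar>pic f (Suc (Suc n)) t w - pic f (Suc n) t w\<bar> \<le> Cst * (Mf f * Kc ^ n) * t ^ Suc (Suc n) / fact (Suc (Suc n))" for w
  proof -
    have "pic f (Suc (Suc n)) t w - pic f (Suc n) t w
        = integral {0..t} (\<lambda>s. Q (pic f (Suc n) s) w) - integral {0..t} (\<lambda>s. Q (pic f n s) w)" by simp
    also have "\<dots> = integral {0..t} (\<lambda>s. Q (pic f (Suc n) s) w - Q (pic f n s) w)"
      by (rule integral_diff[symmetric]) (rule integrable_pic Suc.prems)+
    finally have e: "pic f (Suc (Suc n)) t w - pic f (Suc n) t w = integral {0..t} (\<lambda>s. Q (pic f (Suc n) s) w - Q (pic f n s) w)" .
    have "norm (integral {0..t} (\<lambda>s. Q (pic f (Suc n) s) w - Q (pic f n s) w)) \<le> integral {0..t} ?B"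
    proof (rule integral_norm_bound_integral)
      show "(\<lambda>s. Q (pic f (Suc n) s) w - Q (pic f n s) w) integrable_on {0..t}"
        by (rule integrable_diff) (rule integrable_pic Suc.prems)+
      show "?B integrable_on {0..t}"
        by (rule integrable_continuous_real) (auto intro!: continuous_intros)
    next
      fix s assume s: "s \<in> {0..t}"
      have "\<bar>Q (pic f (Suc n) s) w - Q (pic f n s) w\<bar> \<le> Cst * (\<Sum>v\<in>UNIV. \<bar>pic f (Suc n) s v - pic f n s v\<bar>)"
        by (rule Qlip)
      also have "\<dots> \<le> Cst * (Mf f * Kc ^ n * s ^ Suc n / fact (Suc n))"
        using Suc.IH[of s] s Cst_nonneg by (intro mult_left_mono) auto
      finally show "norm (Q (pic f (Suc n) s) w - Q (pic f n s) w) \<le> ?B s" by simp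
    qed
    also have "integral {0..t} ?B = Cst * (Mf f * Kc ^ n) / fact (Suc n) * t ^ Suc (Suc n) / real (Suc (Suc n))"
      using int_pow[OF Suc.prems, of "Cst * (Mf f * Kc ^ n) / fact (Suc n)" "Suc n"] by simp
    also have "\<dots> = Cst * (Mf f * Kc ^ n) * t ^ Suc (Suc n) / fact (Suc (Suc n))"
      by (simp add: field_simps del: of_nat_Suc)
    finally show ?thesis using e by simp
  qed
  have "(\<Sum>w\<in>UNIV. \<bar>pic f (Suc (Suc n)) t w - pic f (Suc n) t w\<bar>) \<le> (\<Sum>w\<in>(UNIV::'x set). Cst * (Mf f * Kc ^ n) * t ^ Suc (Suc n) / fact (Suc (Suc n)))"
    by (rule sum_mono) (rule w)
  also have "\<dots> = Mf f * Kc ^ Suc n * t ^ Suc (Suc n) / fact (Suc (Suc n))"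
    by (simp add: Kc_def algebra_simps)
  finally show ?case .
qed

end


context ltro begin

definition "sol f t w = f w + suminf (\<lambda>i. pic f (Suc i) t w - pic f i t w)"

lemma pic_diff_bound:
  assumes t: "0 \<le> t" "t \<le> T"
  shows "\<bar>pic f (Suc i) t w - pic f i t w\<bar> \<le> Mf f * T * (Kc * T) ^ i / fact i"
proof -
  have "\<bar>pic f (Suc i) t w - pic f i t w\<bar> \<le> (\<Sum>w\<in>UNIV. \<bar>pic f (Suc i) t w - pic f i t w\<bar>)"
    by (rule member_le_sum) auto
  also have "\<dots> \<le> Mf f * Kc ^ i * t ^ Suc i / fact (Suc i)" by (rule pic_bound[OF t(1)])
  also have "\<dots> \<le> Mf f * Kc ^ i * T ^ Suc i / fact i"
  proof (rule frac_le)
    show "0 \<le> Mf f * Kc ^ i * T ^ Suc i" using Mf_nonneg Kc_nonneg t by simp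
    show "Mf f * Kc ^ i * t ^ Suc i \<le> Mf f * Kc ^ i * T ^ Suc i"
      using Mf_nonneg Kc_nonneg t by (intro mult_left_mono power_mono) auto
    show "(0::real) < fact i" by simp
    show "(fact i :: real) \<le> fact (Suc i)" by (rule fact_mono) simp
  qed
  also have "\<dots> = Mf f * T * (Kc * T) ^ i / fact i" by (simp add: power_mult_distrib algebra_simps)
  finally show ?thesis .
qed

lemma summable_bnd: "summable (\<lambda>i. Mf f * T * (Kc * T) ^ i / fact i)"
proof -
  have "summable (\<lambda>i. (Mf f * T) * (inverse (fact i) * (Kc * T) ^ i))"
    by (rule summable_mult) (rule summable_exp)
  moreover have "(\<lambda>i. (Mf f * T) * (inverse (fact i) * (Kc * T) ^ i)) = (\<lambda>i. Mf f * T * (Kc * T) ^ i / fact i)"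
    by (simp add: divide_inverse algebra_simps)
  ultimately show ?thesis by simp
qed

lemma ulim:
  assumes T: "T \<ge> 0"
  shows "uniform_limit {0..T} (\<lambda>n t. pic f n t w) (\<lambda>t. sol f t w) sequentially"
proof -
  have W: "uniform_limit {0..T} (\<lambda>n t. \<Sum>i<n. pic f (Suc i) t w - pic f i t w)
      (\<lambda>t. suminf (\<lambda>i. pic f (Suc i) t w - pic f i t w)) sequentially"
    by (rule Weierstrass_m_test[OF _ summable_bnd[of f T]]) (use pic_diff_bound in auto)
  show ?thesis
  proof (rule uniform_limitI)
    fix e :: real assume e: "e > 0"
    show "\<forall>\<^sub>F n in sequentially. \<forall>t\<in>{0..T}. dist (pic f n t w) (sol f t w) < e"
      using uniform_limitD[OF W e]
    proof (rule eventually_mono)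
      fix n assume h: "\<forall>t\<in>{0..T}. dist (\<Sum>i<n. pic f (Suc i) t w - pic f i t w) (suminf (\<lambda>i. pic f (Suc i) t w - pic f i t w)) < e"
      show "\<forall>t\<in>{0..T}. dist (pic f n t w) (sol f t w) < e"
      proof
        fix t assume t: "t \<in> {0..T}"
        have eq: "(\<Sum>i<n. pic f (Suc i) t w - pic f i t w) = pic f n t w - f w"
          by (subst sum_lessThan_telescope) simp
        have "dist (\<Sum>i<n. pic f (Suc i) t w - pic f i t w) (suminf (\<lambda>i. pic f (Suc i) t w - pic f i t w)) < e"
          using h t by blast
        then show "dist (pic f n t w) (sol f t w) < e" unfolding sol_def dist_real_def eq abs_less_iff
          by linarith
      qed
    qed
  qed
qed

lemma sol_cont: "continuous_on {0..} (\<lambda>t. sol f t w)"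
proof (rule cont_extend)
  fix T :: real assume T: "T \<ge> 0"
  show "continuous_on {0..T} (\<lambda>t. sol f t w)"
    by (rule uniform_limit_theorem[OF _ ulim[OF T]])
       (auto intro!: always_eventually continuous_on_subset[OF pic_cont])
qed

lemma sol_le0: "t \<le> 0 \<Longrightarrow> sol f t = f"
  by (auto simp: sol_def pic_le0 fun_eq_iff simp del: pic.simps)

lemma sol_lim: "t \<ge> 0 \<Longrightarrow> (\<lambda>n. pic f n t w) \<longlonglongrightarrow> sol f t w"
  by (rule tendsto_uniform_limitI[OF ulim[of t]]) auto

lemma ulimQ:
  assumes t: "t \<ge> 0"
  shows "uniform_limit {0..t} (\<lambda>n s. Q (pic f n s) w) (\<lambda>s. Q (sol f s) w) sequentially"
proof (rule uniform_limitI)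
  fix e :: real assume e: "e > 0"
  define a where "a = Cst * real (card (UNIV::'x set))"
  have a0: "a \<ge> 0" unfolding a_def using Cst_nonneg by simp
  define d where "d = e / (a + 1)"
  have d: "d > 0" unfolding d_def using e a0 by simp
  have ev: "\<forall>\<^sub>F n in sequentially. \<forall>v. \<forall>s\<in>{0..t}. dist (pic f n s v) (sol f s v) < d"
    by (rule eventually_all_finite) (rule uniform_limitD[OF ulim[OF t] d])
  show "\<forall>\<^sub>F n in sequentially. \<forall>s\<in>{0..t}. dist (Q (pic f n s) w) (Q (sol f s) w) < e"
    using ev
  proof (rule eventually_mono)
    fix n assume h: "\<forall>v. \<forall>s\<in>{0..t}. dist (pic f n s v) (sol f s v) < d"
    show "\<forall>s\<in>{0..t}. dist (Q (pic f n s) w) (Q (sol f s) w) < e"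
    proof
      fix s assume s: "s \<in> {0..t}"
      have "\<bar>Q (pic f n s) w - Q (sol f s) w\<bar> \<le> Cst * (\<Sum>v\<in>UNIV. \<bar>pic f n s v - sol f s v\<bar>)"
        by (rule Qlip)
      also have "\<dots> \<le> Cst * (real (card (UNIV::'x set)) * d)"
      proof (rule mult_left_mono[OF _ Cst_nonneg])
        show "(\<Sum>v\<in>UNIV. \<bar>pic f n s v - sol f s v\<bar>) \<le> real (card (UNIV::'x set)) * d"
          by (rule sum_bounded_above) (use h s in \<open>auto simp: dist_real_def less_imp_le\<close>)
      qed
      also have "\<dots> = a * e / (a + 1)" unfolding a_def d_def by simp
      also have "\<dots> < e" using e a0 by (simp add: field_simps)
      finally show "dist (Q (pic f n s) w) (Q (sol f s) w) < e" by (simp add: dist_real_def)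
    qed
  qed
qed

lemma sol_int:
  assumes t: "t \<ge> 0"
  shows "sol f t w = f w + integral {0..t} (\<lambda>s. Q (sol f s) w)"
proof -
  obtain I J where I: "\<And>n. ((\<lambda>s. Q (pic f n s) w) has_integral I n) {0..t}"
    and J: "((\<lambda>s. Q (sol f s) w) has_integral J) {0..t}" and IJ: "I \<longlonglongrightarrow> J"
    by (rule uniform_limit_integral[OF ulimQ[OF t]])
       (auto intro: continuous_on_subset[OF contQ[OF pic_cont]])
  have "(\<lambda>n. pic f (Suc n) t w) = (\<lambda>n. f w + I n)"
    using I by (auto simp: integral_unique)
  then have l1: "(\<lambda>n. pic f (Suc n) t w) \<longlonglongrightarrow> f w + J" using IJ by (simp add: tendsto_add)
  have l2: "(\<lambda>n. pic f (Suc n) t w) \<longlonglongrightarrow> sol f t w"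
    using sol_lim[OF t] by (rule LIMSEQ_Suc)
  have "sol f t w = f w + J" using LIMSEQ_unique[OF l2 l1] .
  then show ?thesis using J by (simp add: integral_unique)
qed

lemma sol_deriv:
  assumes s: "s \<ge> 0"
  shows "((\<lambda>r. sol f r w) has_real_derivative Q (sol f s) w) (at s within {0..})"
proof -
  have c: "continuous_on {0..} (\<lambda>s. Q (sol f s) w)" by (rule contQ) (rule sol_cont)
  have "((\<lambda>u. f w + integral {0..u} (\<lambda>s. Q (sol f s) w)) has_real_derivative 0 + Q (sol f s) w) (at s within {0..})"
    by (rule DERIV_add[OF DERIV_const FTC0[OF c s]])
  then have "((\<lambda>u. f w + integral {0..u} (\<lambda>s. Q (sol f s) w)) has_real_derivative Q (sol f s) w) (at s within {0..})"
    by simp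
  then show ?thesis
    by (rule has_field_derivative_transform_within[where d=1]) (use s sol_int in auto)
qed

lemma exist: "\<exists>\<phi>. solves_lower_ode Q f \<phi> \<and> (\<forall>s<0. \<phi> s = f)"
proof (intro exI conjI allI impI)
  show "solves_lower_ode Q f (sol f)"
    unfolding solves_lower_ode_def using sol_le0[of 0] sol_deriv by auto
  show "sol f s = f" if "s < 0" for s using that sol_le0 by simp
qed

end


context ltro begin


lemma expb_deriv: "solves_lower_ode Q f \<phi> \<Longrightarrow> s \<ge> 0 \<Longrightarrow>
  ((\<lambda>s. exp (- q * s) * \<phi> s w) has_real_derivative exp (- q * s) * (Q (\<phi> s) w - q * \<phi> s w)) (at s within {0..})"
  by (rule derivative_eq_intros sol_D refl | assumption)+ (simp add: algebra_simps)

lemma neg_x: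
  assumes a: "solves_lower_ode Q (\<lambda>w. - indicator {x} w) \<phi>" and t: "t > 0"
  shows "\<phi> t x < 0"
proof -
  define r where "r = upper_rate Q (indicator {x}) x"
  have np: "\<And>s w. s \<ge> 0 \<Longrightarrow> \<phi> s w \<le> 0" by (rule nonpos[OF a]) auto
  have "exp (- r * t) * \<phi> t x \<le> exp (- r * 0) * \<phi> 0 x"
  proof (rule nonincr[where b="\<lambda>s. exp (- r * s) * \<phi> s x" and b'="\<lambda>s. exp (- r * s) * (Q (\<phi> s) x - r * \<phi> s x)"])
    fix s :: real assume "s \<ge> 0"
    then show "((\<lambda>s. exp (- r * s) * \<phi> s x) has_real_derivative exp (- r * s) * (Q (\<phi> s) x - r * \<phi> s x)) (at s within {0..})"
      by (rule expb_deriv[OF a])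
  next
    fix s :: real assume s: "s > 0"
    have "Q (\<phi> s) x \<le> \<phi> s x * r"
      using keyineq[of "\<phi> s" x x] np[of s] s unfolding r_def by auto
    then show "exp (- r * s) * (Q (\<phi> s) x - r * \<phi> s x) \<le> 0"
      by (intro mult_nonneg_nonpos) (auto simp: algebra_simps)
  qed (use t in auto)
  also have "\<dots> = -1" using sol_0[OF a] by simp
  finally show ?thesis
    by (metis exp_gt_zero mult_nonneg_nonneg neg_0_le_iff_le not_le not_one_le_zero order.trans less_eq_real_def)
qed

lemma neg_step:
  assumes a: "solves_lower_ode Q f \<phi>" and f: "\<And>w. f w \<le> 0"
    and nz: "\<And>t. t > 0 \<Longrightarrow> \<phi> t z < 0" and wz: "w \<noteq> z"
    and ur: "upper_rate Q (indicator {z}) w > 0" and t: "t > 0"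
  shows "\<phi> t w < 0"
proof -
  define q where "q = Q (indicator {w}) w"
  have np: "\<And>s w. s \<ge> 0 \<Longrightarrow> \<phi> s w \<le> 0" by (rule nonpos[OF a f])
  have "exp (- q * t) * \<phi> t w < exp (- q * 0) * \<phi> 0 w"
  proof (rule decr[where b="\<lambda>s. exp (- q * s) * \<phi> s w" and b'="\<lambda>s. exp (- q * s) * (Q (\<phi> s) w - q * \<phi> s w)"])
    fix s :: real assume "s \<ge> 0"
    then show "((\<lambda>s. exp (- q * s) * \<phi> s w) has_real_derivative exp (- q * s) * (Q (\<phi> s) w - q * \<phi> s w)) (at s within {0..})"
      by (rule expb_deriv[OF a])
  next
    fix s :: real assume s: "s > 0"
    have "Q (\<phi> s) w \<le> \<phi> s z * upper_rate Q (indicator {z}) w + \<phi> s w * q"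
      using keyineq[of "\<phi> s" w z] np[of s] s wz unfolding q_def by auto
    moreover have "\<phi> s z * upper_rate Q (indicator {z}) w < 0"
      using nz[OF s] ur by (simp add: mult_neg_pos)
    ultimately have "Q (\<phi> s) w - q * \<phi> s w < 0" by (simp add: algebra_simps)
    then show "exp (- q * s) * (Q (\<phi> s) w - q * \<phi> s w) < 0"
      by (simp add: mult_pos_neg)
  qed (use t in auto)
  also have "\<dots> \<le> 0" using sol_0[OF a] f[of w] by simp
  finally have "exp (- q * t) * \<phi> t w < 0" .
  then show ?thesis by (simp add: mult_less_0_iff)
qed

lemma reach_neg:
  assumes a: "solves_lower_ode Q (\<lambda>w. - indicator {x} w) \<phi>" and r: "upper_reachable Q x y" and t: "t > 0"
  shows "\<phi> t y < 0"
proof -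
  obtain n :: nat and s where s: "s 0 = y" "s n = x"
    "\<forall>k\<in>{1..n}. s k \<noteq> s (k - 1) \<and> upper_rate Q (indicator {s k}) (s (k - 1)) > 0"
    using r unfolding upper_reachable_def by blast
  have "j \<le> n \<longrightarrow> (\<forall>t>0. \<phi> t (s (n - j)) < 0)" for j
  proof (induction j)
    case 0
    then show ?case using neg_x[OF a] s(2) by auto
  next
    case (Suc j)
    show ?case
    proof
      assume j: "Suc j \<le> n"
      define k where "k = n - j"
      have k: "k \<in> {1..n}" using j by (auto simp: k_def)
      have e: "n - Suc j = k - 1" by (simp add: k_def)
      have IH: "\<And>t. t > 0 \<Longrightarrow> \<phi> t (s k) < 0" using Suc j by (auto simp: k_def)
      show "\<forall>t>0. \<phi> t (s (n - Suc j)) < 0"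
        unfolding e using neg_step[OF a _ IH] s(3)[rule_format, OF k] by auto
    qed
  qed
  from this[of n] t s(1) show ?thesis by auto
qed

lemma rate_le:
  assumes z: "\<not> upper_reachable Q x z" and v: "upper_reachable Q x v"
  shows "upper_rate Q (indicator {v}) z \<le> 0"
proof (rule ccontr)
  assume c: "\<not> ?thesis"
  obtain n :: nat and s where s: "s 0 = v" "s n = x"
    "\<forall>k\<in>{1..n}. s k \<noteq> s (k - 1) \<and> upper_rate Q (indicator {s k}) (s (k - 1)) > 0"
    using v unfolding upper_reachable_def by blast
  have vz: "v \<noteq> z" using z v by auto
  define s' where "s' k = (if k = 0 then z else s (k - 1))" for k
  have "s' 0 = z \<and> s' (Suc n) = x \<and>
        (\<forall>k\<in>{1..Suc n}. s' k \<noteq> s' (k - 1) \<and> upper_rate Q (indicator {s' k}) (s' (k - 1)) > 0)"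
  proof -
    have "\<forall>k\<in>{1..Suc n}. s' k \<noteq> s' (k - 1) \<and> upper_rate Q (indicator {s' k}) (s' (k - 1)) > 0"
    proof
    fix k assume k: "k \<in> {1..Suc n}"
    show "s' k \<noteq> s' (k - 1) \<and> upper_rate Q (indicator {s' k}) (s' (k - 1)) > 0"
    proof (cases "k = 1")
      case True then show ?thesis using vz c s(1) by (auto simp: s'_def)
    next
      case False
      then have "k - 1 \<in> {1..n}" "k \<noteq> 0" "k - 1 \<noteq> 0" using k by auto
      then show ?thesis using s(3)[rule_format, of "k - 1"] by (auto simp: s'_def)
    qed
    qed
    then show ?thesis by (auto simp: s'_def s(2))
  qed
  then have "upper_reachable Q x z" unfolding upper_reachable_def by blast
  with z show False by simp
qed

lemma lowQ:
  assumes g: "\<And>v. g v \<le> 0" and z: "\<not> upper_reachable Q x z"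
  shows "Q g z \<ge> Cst * (\<Sum>v\<in>{v. \<not> upper_reachable Q x v}. g v)"
proof -
  let ?N = "{v. \<not> upper_reachable Q x v}"
  have "(\<Sum>v\<in>UNIV. (if v \<in> ?N then Cst * g v else 0)) \<le> (\<Sum>v\<in>UNIV. Q (\<lambda>w. g v * indicator {v} w) z)"
  proof (rule sum_mono)
    fix v
    have e: "(\<lambda>w. g v * indicator {v} w) = (\<lambda>w. (- g v) * (- indicator {v} w))" by auto
    have "Q (\<lambda>w. g v * indicator {v} w) z = (- g v) * Q (\<lambda>w. - indicator {v} w) z"
      unfolding e using g[of v] by (intro Qhom) auto
    also have "\<dots> = g v * upper_rate Q (indicator {v}) z" by (simp add: upper_rate_def)
    finally have eq: "Q (\<lambda>w. g v * indicator {v} w) z = g v * upper_rate Q (indicator {v}) z" .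
    show "(if v \<in> ?N then Cst * g v else 0) \<le> Q (\<lambda>w. g v * indicator {v} w) z"
    proof (cases "v \<in> ?N")
      case True
      have "upper_rate Q (indicator {v}) z \<le> Cst"
        using Cst_ge(2)[of v z] by (simp add: upper_rate_def)
      then have "g v * Cst \<le> g v * upper_rate Q (indicator {v}) z"
        using g[of v] by (rule mult_left_mono_neg)
      then show ?thesis using True eq by (simp add: mult.commute)
    next
      case False
      then have "upper_rate Q (indicator {v}) z \<le> 0" using rate_le[OF z] by auto
      then show ?thesis using False eq g[of v] by (simp add: mult_nonpos_nonpos)
    qed
  qed
  also have "\<dots> \<le> Q (\<lambda>w. \<Sum>v\<in>UNIV. g v * indicator {v} w) z" by (rule Qsum) simp
  also have "\<dots> = Q g z" using decomp[of g, symmetric] by simp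
  finally have "(\<Sum>v\<in>UNIV. (if v \<in> ?N then Cst * g v else 0)) \<le> Q g z" .
  moreover have "(\<Sum>v\<in>UNIV. (if v \<in> ?N then Cst * g v else 0)) = (\<Sum>v\<in>?N. Cst * g v)"
    by (subst sum.inter_restrict[where A=UNIV and B="?N", symmetric]) simp_all
  ultimately show ?thesis by (simp add: sum_distrib_left)
qed

lemma unreach_zero:
  assumes a: "solves_lower_ode Q (\<lambda>w. - indicator {x} w) \<phi>" and y: "\<not> upper_reachable Q x y" and t: "t \<ge> 0"
  shows "\<phi> t y = 0"
proof -
  let ?N = "{v. \<not> upper_reachable Q x v}"
  have xR: "upper_reachable Q x x" unfolding upper_reachable_def
    by (rule exI[of _ 0], rule exI[of _ "\<lambda>_. x"]) auto
  have np: "\<And>s w. s \<ge> 0 \<Longrightarrow> \<phi> s w \<le> 0" by (rule nonpos[OF a]) auto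
  define S where "S r = - (\<Sum>z\<in>?N. \<phi> r z)" for r
  define S' where "S' s = - (\<Sum>z\<in>?N. Q (\<phi> s) z)" for s
  have "S t \<le> 0"
  proof (rule gronwall[where P=S and P'=S' and K="real (card ?N) * Cst"])
    fix s :: real assume s: "s \<ge> 0"
    show "(S has_real_derivative S' s) (at s within {0..})"
      unfolding S_def S'_def by (intro DERIV_minus DERIV_sum sol_D[OF a s])
    have "S' s \<le> - (\<Sum>z\<in>?N. Cst * (\<Sum>v\<in>?N. \<phi> s v))"
    proof -
      have "(\<Sum>z\<in>?N. Cst * (\<Sum>v\<in>?N. \<phi> s v)) \<le> (\<Sum>z\<in>?N. Q (\<phi> s) z)"
        by (rule sum_mono) (rule lowQ[where g="\<phi> s"], rule np[OF s], simp)
      then show ?thesis unfolding S'_def by linarith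
    qed
    also have "\<dots> = real (card ?N) * Cst * S s" by (simp add: S_def)
    finally show "S' s \<le> real (card ?N) * Cst * S s" .
  next
    have "\<And>z. z \<in> ?N \<Longrightarrow> \<phi> 0 z = 0" using sol_0[OF a] xR by (auto simp: indicator_def)
    then show "S 0 \<le> 0" unfolding S_def by simp
  qed (rule t)
  then have "\<forall>z\<in>?N. - \<phi> t z = 0"
    using np[OF t] unfolding S_def
    by (subst sum_nonneg_eq_0_iff[symmetric]) (auto intro!: antisym sum_nonneg sum_nonpos simp: sum_negf)
  then show ?thesis using y by auto
qed

end

theorem proposition11:
  fixes Q :: "('x::finite \<Rightarrow> real) \<Rightarrow> ('x \<Rightarrow> real)"
    and t :: real and x y :: 'x
  assumes "lower_transition_rate_operator Q"
    and "t > 0"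
  shows "upper_T Q t (indicator {x}) y > 0 \<longleftrightarrow> upper_reachable Q x y"
proof -
  interpret ltro Q by unfold_locales (rule assms(1))
  let ?f = "\<lambda>w. - indicator {x} w :: real"
  obtain \<phi> where phi: "solves_lower_ode Q ?f \<phi>" "\<forall>s<0. \<phi> s = ?f" using exist by blast
  have "(THE \<phi>. solves_lower_ode Q ?f \<phi> \<and> (\<forall>s<0. \<phi> s = ?f)) = \<phi>"
  proof (rule the1_equality)
    show "\<exists>!\<phi>. solves_lower_ode Q ?f \<phi> \<and> (\<forall>s<0. \<phi> s = ?f)"
    proof (rule ex1I[of _ \<phi>])
      fix \<psi> assume p: "solves_lower_ode Q ?f \<psi> \<and> (\<forall>s<0. \<psi> s = ?f)"
      show "\<psi> = \<phi>"
      proof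
        fix s show "\<psi> s = \<phi> s"
          using p phi uniq[of ?f \<psi> \<phi> s] by (cases "s < 0") auto
      qed
    qed (use phi in auto)
  qed (use phi in auto)
  then have "lower_T Q t ?f = \<phi> t" unfolding lower_T_def by simp
  then have e: "upper_T Q t (indicator {x}) y = - \<phi> t y" unfolding upper_T_def by simp
  show ?thesis
  proof
    assume "upper_T Q t (indicator {x}) y > 0"
    then show "upper_reachable Q x y" using unreach_zero[OF phi(1), of y t] assms(2) e by auto
  next
    assume "upper_reachable Q x y"
    then show "upper_T Q t (indicator {x}) y > 0" using reach_neg[OF phi(1) _ assms(2)] e by auto
  qed
qed


end
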